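(* Fix an arm $a$, a time $t$ with $n(\mathcal{T}_{a,t})\ge1$ and $\max\mathcal{T}_{a,t}\le t$, a point $(\hat\theta_a,\hat x_{a,0})\in\Theta\times\mathcal{X}$ and $\gamma\ge0$, and define $$\psi_{a,t}(\gamma)=\max\Big\{\big|g(\theta,h_a^t(x_0))-g(\hat\theta_a,h_a^t(\hat x_{a,0}))\big| : (\theta,x_0)\in\Theta\times\mathcal{X},\ \sum_{t'\in\mathcal{T}_{a,t}}\frac{\big(g(\theta,h_a^{t'}(x_0))-g(\hat\theta_a,h_a^{t'}(\hat x_{a,0}))\big)^2}{2\sigma\,n(\mathcal{T}_{a,t})}\le\gamma\Big\}.$$ Then $\psi_{a,t}(\gamma)\le L_g^2\sqrt{2\sigma\gamma}$.
   Context: Setting: $\Theta\subset\mathbb{R}^{d_\theta}$, $\mathcal{X}\subset\mathbb{R}^{d_x}$ compact convex. For arm $a$, states evolve by known dynamics $x_{s+1}=h_a(x_s,\pi_{a,s})$ along a fixed action sequence, $\pi_{a,s}\in\{0,1\}$; $h_a^s(x_0)$ denotes the state at time $s$ reached from $x_0$. $\mathcal{T}_{a,t}\subseteq\{1,\dots,t\}$ is the set of times up to $t$ at which arm $a$ is selected, $n(\mathcal{T}_{a,t})=|\mathcal{T}_{a,t}|$. $g:\Theta\times\mathcal{X}\to\mathbb{R}$ is $L_g$-bi-Lipschitz: $\frac{1}{L_g}\|u-v\|_2\le|g(u)-g(v)|\le L_g\|u-v\|_2$ for all $u,v\in\Theta\times\mathcal{X}$. The dynamics $h_a(\cdot,b)$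 are $L_h$-Lipschitz in the state with $L_h\le1$. $\sigma>0$ is the sub-Gaussian parameter of the reward distributions. *)

theory Defs
  imports "HOL-Analysis.Analysis"
begin

primrec traj :: "('arm \<Rightarrow> 'x \<Rightarrow> nat \<Rightarrow> 'x) \<Rightarrow> ('arm \<Rightarrow> nat \<Rightarrow> nat) \<Rightarrow> 'arm \<Rightarrow> nat \<Rightarrow> 'x \<Rightarrow> 'x" where
  "traj h act a 0 x0 = x0"
| "traj h act a (Suc s) x0 = h a (traj h act a s x0) (act a s)"

definition bi_lipschitz_on :: "real \<Rightarrow> 'a::metric_space set \<Rightarrow> ('a \<Rightarrow> real) \<Rightarrow> bool" where
  "bi_lipschitz_on L S f \<longleftrightarrow>
     (\<forall>u\<in>S. \<forall>v\<in>S. dist u v / L \<le> \<bar>f u - f v\<bar> \<and> \<bar>f u - f v\<bar> \<le> L * dist u v)"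

definition psi ::
  "'th set \<Rightarrow> 'x set \<Rightarrow> ('th \<times> 'x \<Rightarrow> real) \<Rightarrow> ('arm \<Rightarrow> 'x \<Rightarrow> nat \<Rightarrow> 'x) \<Rightarrow> ('arm \<Rightarrow> nat \<Rightarrow> nat)
   \<Rightarrow> ('arm \<Rightarrow> nat \<Rightarrow> nat set) \<Rightarrow> real \<Rightarrow> 'arm \<Rightarrow> nat \<Rightarrow> 'th \<Rightarrow> 'x \<Rightarrow> real \<Rightarrow> real" where
  "psi Theta X g h act T sg a t thh xh gamma =
     Sup {\<bar>g (th, traj h act a t x0) - g (thh, traj h act a t xh)\<bar> | th x0.
            th \<in> Theta \<and> x0 \<in> X \<and>
            (\<Sum>t'\<in>T a t. (g (th, traj h act a t' x0) - g (thh, traj h act a t' xh))\<^sup>2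
                 / (2 * sg * real (card (T a t)))) \<le> gamma}"

end

theory Submission
  imports Defs
begin

lemma traj_in:
  assumes "\<And>s. act a s \<in> {0, 1}"
    and "\<And>b x. b \<in> {0, 1} \<Longrightarrow> x \<in> X \<Longrightarrow> h a x b \<in> X"
    and "x \<in> X"
  shows "traj h act a s x \<in> X"
  using assms by (induction s) auto

lemma traj_mono:
  assumes "\<And>s. act a s \<in> {0, 1}"
    and "\<And>b x. b \<in> {0, 1} \<Longrightarrow> x \<in> X \<Longrightarrow> h a x b \<in> X"
    and "\<And>b. b \<in> {0, 1} \<Longrightarrow> Lh-lipschitz_on X (\<lambda>x. h a x b)"
    and "Lh \<le> 1"
    and "x \<in> X" "y \<in> X" "s' \<le> s"
  shows "dist (traj h act a s x) (traj h act a s y) \<le> dist (traj h act a s' x) (traj h act a s' y)"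
  using assms(7)
proof (induction s)
  case 0
  then show ?case by simp
next
  case (Suc s)
  show ?case
  proof (cases "s' = Suc s")
    case True
    then show ?thesis by simp
  next
    case False
    then have IH: "dist (traj h act a s x) (traj h act a s y) \<le> dist (traj h act a s' x) (traj h act a s' y)"
      using Suc by simp
    have L: "Lh-lipschitz_on X (\<lambda>x. h a x (act a s))" using assms(1,3) by blast
    have inx: "traj h act a s x \<in> X" and iny: "traj h act a s y \<in> X"
      using traj_in[of act a X h, OF assms(1,2)] assms(5,6) by auto
    have "dist (traj h act a (Suc s) x) (traj h act a (Suc s) y)
        \<le> Lh * dist (traj h act a s x) (traj h act a s y)"
      using lipschitz_onD[OF L inx iny] by simp
    also have "\<dots> \<le> dist (traj h act a s x) (traj h act a s y)"
      using assms(4) mult_right_mono[of Lh 1 "dist (traj h act a s x) (traj h act a s y)"] by simp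
    finally show ?thesis using IH by linarith
  qed
qed

theorem lemma1:
  fixes Theta :: "'th::euclidean_space set" and X :: "'x::euclidean_space set"
    and g :: "'th \<times> 'x \<Rightarrow> real" and h :: "'arm \<Rightarrow> 'x \<Rightarrow> nat \<Rightarrow> 'x"
    and act :: "'arm \<Rightarrow> nat \<Rightarrow> nat" and T :: "'arm \<Rightarrow> nat \<Rightarrow> nat set"
    and Lg Lh sg gamma :: real and a :: 'arm and t :: nat
    and thh :: 'th and xh :: 'x
  assumes "compact Theta" "convex Theta" "compact X" "convex X"
    and "\<And>s. act a s \<in> {0, 1}"
    and "\<And>b x. b \<in> {0, 1} \<Longrightarrow> x \<in> X \<Longrightarrow> h a x b \<in> X"
    and "\<And>b. b \<in> {0, 1} \<Longrightarrow> Lh-lipschitz_on X (\<lambda>x. h a x b)"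
    and "Lh \<le> 1"
    and "bi_lipschitz_on Lg (Theta \<times> X) g"
    and "sg > 0"
    and "T a t \<subseteq> {1..t}"
    and "card (T a t) \<ge> 1"
    and "Max (T a t) \<le> t"
    and "thh \<in> Theta" "xh \<in> X"
    and "gamma \<ge> 0"
  shows "psi Theta X g h act T sg a t thh xh gamma \<le> Lg\<^sup>2 * sqrt (2 * sg * gamma)"
  unfolding psi_def
proof (rule cSup_least)
  let ?n = "real (card (T a t))"
  have fin: "finite (T a t)" using assms(11) finite_subset by blast
  have npos: "?n > 0" using assms(12) by simp
  show "{\<bar>g (th, traj h act a t x0) - g (thh, traj h act a t xh)\<bar> | th x0.
            th \<in> Theta \<and> x0 \<in> X \<and>
            (\<Sum>t'\<in>T a t. (g (th, traj h act a t' x0) - g (thh, traj h act a t' xh))\<^sup>2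
                 / (2 * sg * real (card (T a t)))) \<le> gamma} \<noteq> {}"
  proof -
    have "(\<Sum>t'\<in>T a t. (g (thh, traj h act a t' xh) - g (thh, traj h act a t' xh))\<^sup>2
                 / (2 * sg * real (card (T a t)))) \<le> gamma" using assms(16) by simp
    then show ?thesis using assms(14,15) by blast
  qed
  fix z assume "z \<in> {\<bar>g (th, traj h act a t x0) - g (thh, traj h act a t xh)\<bar> | th x0.
            th \<in> Theta \<and> x0 \<in> X \<and>
            (\<Sum>t'\<in>T a t. (g (th, traj h act a t' x0) - g (thh, traj h act a t' xh))\<^sup>2
                 / (2 * sg * real (card (T a t)))) \<le> gamma}"
  then obtain th x0 where z: "z = \<bar>g (th, traj h act a t x0) - g (thh, traj h act a t xh)\<bar>"
    and th: "th \<in> Theta" and x0: "x0 \<in> X"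
    and S: "(\<Sum>t'\<in>T a t. (g (th, traj h act a t' x0) - g (thh, traj h act a t' xh))\<^sup>2
                 / (2 * sg * ?n)) \<le> gamma" by blast
  define D where "D t' = (g (th, traj h act a t' x0) - g (thh, traj h act a t' xh))\<^sup>2" for t'
  define s where "s = sqrt (2 * sg * gamma)"
  have s0: "s \<ge> 0" using assms(10,16) by (simp add: s_def)
  have "(\<Sum>t'\<in>T a t. D t') / (2 * sg * ?n) \<le> gamma"
    using S by (simp add: D_def sum_divide_distrib)
  hence S2: "(\<Sum>t'\<in>T a t. D t') \<le> ?n * (2 * sg * gamma)"
    using npos assms(10) by (simp add: divide_le_eq mult_ac)
  obtain t' where t': "t' \<in> T a t" "D t' \<le> 2 * sg * gamma"
  proof (rule ccontr)
    assume "\<not> thesis"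
    with that have lt: "\<forall>t'\<in>T a t. 2 * sg * gamma < D t'" by force
    have ne: "T a t \<noteq> {}" using assms(12) by auto
    have "(\<Sum>t'\<in>T a t. 2 * sg * gamma) < (\<Sum>t'\<in>T a t. D t')"
      using lt by (intro sum_strict_mono[OF fin ne]) simp
    with S2 show False by simp
  qed
  have tt: "t' \<le> t" using t'(1) assms(11) by auto
  have d1: "\<bar>g (th, traj h act a t' x0) - g (thh, traj h act a t' xh)\<bar> \<le> s"
    using t'(2) unfolding D_def s_def by (simp add: real_le_rsqrt)
  have in1: "traj h act a t' x0 \<in> X" "traj h act a t' xh \<in> X"
            "traj h act a t x0 \<in> X" "traj h act a t xh \<in> X"
    using traj_in[of act a X h, OF assms(5,6)] x0 assms(15) by auto
  have mono: "dist (traj h act a t x0) (traj h act a t xh) \<le> dist (traj h act a t' x0) (traj h act a t' xh)"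
    using traj_mono[of act a X h Lh x0 xh t' t, OF assms(5,6,7,8) x0 assms(15) tt] .
  have dmono: "dist (th, traj h act a t x0) (thh, traj h act a t xh)
      \<le> dist (th, traj h act a t' x0) (thh, traj h act a t' xh)"
    unfolding dist_Pair_Pair
    using mono by (intro real_sqrt_le_mono add_left_mono power_mono) auto
  have BL: "\<And>u v. u \<in> Theta \<times> X \<Longrightarrow> v \<in> Theta \<times> X \<Longrightarrow>
      dist u v / Lg \<le> \<bar>g u - g v\<bar> \<and> \<bar>g u - g v\<bar> \<le> Lg * dist u v"
    using assms(9) unfolding bi_lipschitz_on_def by blast
  have A: "dist (th, traj h act a t' x0) (thh, traj h act a t' xh) / Lg \<le> s"
    using BL[of "(th, traj h act a t' x0)" "(thh, traj h act a t' xh)"] th assms(14) in1 d1 by auto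
  have B: "z \<le> Lg * dist (th, traj h act a t x0) (thh, traj h act a t xh)"
    using BL[of "(th, traj h act a t x0)" "(thh, traj h act a t xh)"] th assms(14) in1 z by auto
  show "z \<le> Lg\<^sup>2 * sqrt (2 * sg * gamma)"
  proof (cases "Lg > 0")
    case True
    have "dist (th, traj h act a t' x0) (thh, traj h act a t' xh) \<le> Lg * s"
      using A True by (simp add: divide_le_eq mult.commute)
    hence "Lg * dist (th, traj h act a t x0) (thh, traj h act a t xh) \<le> Lg * (Lg * s)"
      using dmono True by (intro mult_left_mono) auto
    with B show ?thesis by (simp add: s_def power2_eq_square mult.assoc)
  next
    case False
    hence "Lg * dist (th, traj h act a t x0) (thh, traj h act a t xh) \<le> 0"
      by (simp add: mult_nonpos_nonneg)
    moreover have "Lg\<^sup>2 * s \<ge> 0" using s0 by simp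
    ultimately show ?thesis unfolding s_def[symmetric] using B by linarith
  qed
qed

end
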